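(* Let $H$ and $K$ be finite groups and $G = H \times K$. Then: (i) $\eta(G) \ge \eta(H)\eta(K)$. (ii) If $\gcd(|H|,|K|) = 1$, then $\eta(G) = \eta(H)\eta(K)$. (iii) If $p$ is a prime dividing $|K|$ and $H$ is a nontrivial $p$-group, then $\eta(G) \ge \eta(H)\eta(K) + \eta_p(K) > \eta(H)\eta(K)$, where $\eta_p(K)$ is the number of conjugacy classes of maximal cyclic subgroups of $K$ whose order is divisible by $p$. (iv) If $H$ is nilpotent and a prime $p$ divides both $|H|$ and $|K|$, then $\eta(G) > \eta(K)$. (v) If $H$ and $K$ are both nontrivial $p$-groups for a prime $p$, then $\eta(G) \ge \eta(H)\eta(K) + \eta(H) + \eta(K)$.
   Context: A cyclic subgroup $C$ of a finite group $G$ is maximal cyclic if there is no cyclic subgroup $D$ of $G$ with $C < D$. $\eta(G)$ denotes the number of conjugacy classes of maximal cyclic subgroups of $G$. *)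

theory Defs
  imports "HOL-Algebra.Algebra"
begin

definition cyclic_subgroup :: "('a, 'b) monoid_scheme \<Rightarrow> 'a set \<Rightarrow> bool" where
  "cyclic_subgroup G C \<longleftrightarrow> (\<exists>x \<in> carrier G. C = generate G {x})"

definition max_cyclic_subgroup :: "('a, 'b) monoid_scheme \<Rightarrow> 'a set \<Rightarrow> bool" where
  "max_cyclic_subgroup G C \<longleftrightarrow> cyclic_subgroup G C \<and>
     \<not> (\<exists>D. cyclic_subgroup G D \<and> C \<subset> D)"

definition max_cyclic_subgroups :: "('a, 'b) monoid_scheme \<Rightarrow> 'a set set" where
  "max_cyclic_subgroups G = {C. max_cyclic_subgroup G C}"

definition conj_subset :: "('a, 'b) monoid_scheme \<Rightarrow> 'a \<Rightarrow> 'a set \<Rightarrow> 'a set" where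
  "conj_subset G g A = (\<lambda>a. g \<otimes>\<^bsub>G\<^esub> a \<otimes>\<^bsub>G\<^esub> inv\<^bsub>G\<^esub> g) ` A"

definition subset_conj_rel :: "('a, 'b) monoid_scheme \<Rightarrow> 'a set set \<Rightarrow> ('a set \<times> 'a set) set" where
  "subset_conj_rel G S = {(A, B). A \<in> S \<and> B \<in> S \<and> (\<exists>g \<in> carrier G. B = conj_subset G g A)}"

definition eta :: "('a, 'b) monoid_scheme \<Rightarrow> nat" where
  "eta G = card (max_cyclic_subgroups G // subset_conj_rel G (max_cyclic_subgroups G))"

definition eta_p :: "nat \<Rightarrow> ('a, 'b) monoid_scheme \<Rightarrow> nat" where
  "eta_p p G = (let S = {C \<in> max_cyclic_subgroups G. p dvd card C} in card (S // subset_conj_rel G S))"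

definition p_group :: "nat \<Rightarrow> ('a, 'b) monoid_scheme \<Rightarrow> bool" where
  "p_group p G \<longleftrightarrow> Factorial_Ring.prime p \<and> (\<exists>n. order G = p ^ n)"

definition commutator_subgroup :: "('a, 'b) monoid_scheme \<Rightarrow> 'a set \<Rightarrow> 'a set \<Rightarrow> 'a set" where
  "commutator_subgroup G A B = generate G
     (\<Union>a \<in> A. \<Union>b \<in> B. {a \<otimes>\<^bsub>G\<^esub> b \<otimes>\<^bsub>G\<^esub> inv\<^bsub>G\<^esub> a \<otimes>\<^bsub>G\<^esub> inv\<^bsub>G\<^esub> b})"

fun lower_central_series :: "('a, 'b) monoid_scheme \<Rightarrow> nat \<Rightarrow> 'a set" where
  "lower_central_series G 0 = carrier G"
| "lower_central_series G (Suc n) = commutator_subgroup G (lower_central_series G n) (carrier G)"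

definition nilpotent_group :: "('a, 'b) monoid_scheme \<Rightarrow> bool" where
  "nilpotent_group G \<longleftrightarrow> group G \<and> (\<exists>n. lower_central_series G n = {\<one>\<^bsub>G\<^esub>})"

end

theory Submission
  imports Defs "HOL-Algebra.Sylow"
begin

definition cyc :: "('a, 'b) monoid_scheme \<Rightarrow> 'a \<Rightarrow> 'a set" where
  "cyc G x = range (\<lambda>n::nat. x [^]\<^bsub>G\<^esub> n)"

lemma DirProd_pow: "(u,v) [^]\<^bsub>H \<times>\<times> K\<^esub> (n::nat) = (u [^]\<^bsub>H\<^esub> n, v [^]\<^bsub>K\<^esub> n)"
  by (induct n) simp_all

lemma gen_cyc:
  assumes "group G" "finite (carrier G)" "x \<in> carrier G"
  shows "generate G {x} = cyc G x"
  using group.generate_pow_on_finite_carrier[OF assms] unfolding cyc_def by auto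

lemma cyc_sub:
  assumes "group G" "x \<in> carrier G"
  shows "cyc G x \<subseteq> carrier G"
  using assms unfolding cyc_def by (auto intro: monoid.nat_pow_closed group.is_monoid)

lemma cyc_self:
  assumes "group G" "x \<in> carrier G"
  shows "x \<in> cyc G x"
proof -
  have "x = x [^]\<^bsub>G\<^esub> (1::nat)" using assms by (simp add: group.is_monoid monoid.nat_pow_eone)
  then show ?thesis unfolding cyc_def by blast
qed

lemma cyclic_iff:
  assumes "group G" "finite (carrier G)"
  shows "cyclic_subgroup G C \<longleftrightarrow> (\<exists>x\<in>carrier G. C = cyc G x)"
  using gen_cyc[OF assms] unfolding cyclic_subgroup_def by auto

lemma card_cyc:
  assumes "group G" "finite (carrier G)" "x \<in> carrier G"
  shows "card (cyc G x) = group.ord G x"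
  using group.generate_pow_card[OF assms(1,3)] gen_cyc[OF assms] by simp

lemma mc_cyc:
  assumes "group G" "finite (carrier G)" "max_cyclic_subgroup G C"
  shows "\<exists>x\<in>carrier G. C = cyc G x"
  using assms cyclic_iff unfolding max_cyclic_subgroup_def by blast

lemma mc_sub:
  assumes "group G" "finite (carrier G)" "max_cyclic_subgroup G C"
  shows "C \<subseteq> carrier G"
  using mc_cyc[OF assms] cyc_sub[OF assms(1)] by blast

lemma mc_eq:
  assumes "group G" "finite (carrier G)" "max_cyclic_subgroup G A" "A \<subseteq> cyc G x" "x \<in> carrier G"
  shows "cyc G x = A"
  using assms cyclic_iff[OF assms(1,2)] unfolding max_cyclic_subgroup_def by blast

lemma exists_mc:
  assumes "group G" "finite (carrier G)" "x \<in> carrier G"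
  shows "\<exists>C. max_cyclic_subgroup G C \<and> cyc G x \<subseteq> C"
proof -
  let ?F = "{D. cyclic_subgroup G D \<and> cyc G x \<subseteq> D}"
  have fin: "finite ?F"
  proof (rule finite_subset[of _ "Pow (carrier G)"])
    show "?F \<subseteq> Pow (carrier G)"
      using cyclic_iff[OF assms(1,2)] cyc_sub[OF assms(1)] by blast
  qed (use assms in auto)
  have ne: "cyc G x \<in> ?F" using cyclic_iff[OF assms(1,2)] assms(3) by blast
  obtain D where D: "D \<in> ?F" "\<forall>D'\<in>?F. D \<subseteq> D' \<longrightarrow> D = D'"
    using finite_has_maximal2[OF fin ne] by blast
  have "max_cyclic_subgroup G D"
    unfolding max_cyclic_subgroup_def
  proof (intro conjI notI)
    show "cyclic_subgroup G D" using D by simp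
    assume "\<exists>D'. cyclic_subgroup G D' \<and> D \<subset> D'"
    then obtain D' where "cyclic_subgroup G D'" "D \<subset> D'" by blast
    then show False using D by blast
  qed
  then show ?thesis using D by blast
qed


lemma conj_one:
  fixes G (structure)
  assumes "group G" "A \<subseteq> carrier G"
  shows "conj_subset G \<one>\<^bsub>G\<^esub> A = A"
proof -
  interpret group G by fact
  have "\<And>a. a \<in> A \<Longrightarrow> \<one> \<otimes> a \<otimes> inv \<one> = a" using assms(2) by auto
  then show ?thesis unfolding conj_subset_def by simp
qed

lemma conj_sub:
  fixes G (structure)
  assumes "group G" "A \<subseteq> carrier G" "g \<in> carrier G"
  shows "conj_subset G g A \<subseteq> carrier G"
proof -
  interpret group G by fact
  show ?thesis unfolding conj_subset_def using assms by auto
qed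

lemma conj_comp:
  fixes G (structure)
  assumes "group G" "A \<subseteq> carrier G" "g \<in> carrier G" "h \<in> carrier G"
  shows "conj_subset G h (conj_subset G g A) = conj_subset G (h \<otimes>\<^bsub>G\<^esub> g) A"
proof -
  interpret group G by fact
  have "\<And>a. a \<in> A \<Longrightarrow> h \<otimes> (g \<otimes> a \<otimes> inv g) \<otimes> inv h = h \<otimes> g \<otimes> a \<otimes> inv (h \<otimes> g)"
    using assms by (auto simp: inv_mult_group m_assoc)
  then show ?thesis unfolding conj_subset_def image_image by auto
qed

lemma conj_inv:
  fixes G (structure)
  assumes "group G" "A \<subseteq> carrier G" "g \<in> carrier G"
  shows "conj_subset G (inv\<^bsub>G\<^esub> g) (conj_subset G g A) = A"
proof -
  interpret group G by fact
  show ?thesis using conj_comp[OF assms(1,2,3)] conj_one[OF assms(1,2)] assms by simp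
qed

lemma equiv_conj:
  fixes G (structure)
  assumes "group G" "\<forall>A\<in>S. A \<subseteq> carrier G"
  shows "equiv S (subset_conj_rel G S)"
proof (rule equivI)
  interpret group G by fact
  show "refl_on S (subset_conj_rel G S)"
    unfolding refl_on_def subset_conj_rel_def using conj_one[OF assms(1)] assms(2)
    by (auto intro!: bexI[of _ \<one>])
  show "sym (subset_conj_rel G S)"
    unfolding sym_def subset_conj_rel_def using conj_inv[OF assms(1)] assms(2)
    by (auto intro!: bexI[of _ "inv _"])
  show "trans (subset_conj_rel G S)"
    unfolding trans_def subset_conj_rel_def using conj_comp[OF assms(1)] assms(2)
    by (auto intro!: bexI[of _ "_ \<otimes> _"])
qed (auto simp: subset_conj_rel_def)

lemma transversal:
  assumes "equiv S R" "finite S"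
  shows "\<exists>T\<subseteq>S. card T = card (S//R) \<and> (\<forall>t\<in>T. \<forall>t'\<in>T. (t,t') \<in> R \<longrightarrow> t = t')
     \<and> (\<forall>s\<in>S. \<exists>t\<in>T. (s,t) \<in> R)"
proof -
  define rep :: "'a set \<Rightarrow> 'a" where "rep = (\<lambda>Q1. SOME x. x \<in> Q1)"
  have rep: "rep Q1 \<in> Q1" if "Q1 \<in> S//R" for Q1
    unfolding rep_def using in_quotient_imp_non_empty[OF assms(1) that] by (simp add: some_in_eq)
  have inj: "inj_on rep (S//R)"
    by (rule inj_onI) (metis rep quotient_disj[OF assms(1)] disjoint_iff)
  define T where "T = rep ` (S//R)"
  have "T \<subseteq> S" unfolding T_def using rep in_quotient_imp_subset[OF assms(1)] by blast
  moreover have "card T = card (S//R)" unfolding T_def using card_image[OF inj] .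
  moreover have "\<forall>t\<in>T. \<forall>t'\<in>T. (t,t') \<in> R \<longrightarrow> t = t'"
  proof (intro ballI impI)
    fix t t' assume "t \<in> T" "t' \<in> T" "(t,t') \<in> R"
    then obtain Q1 Q2 where Q12: "Q1 \<in> S//R" "Q2 \<in> S//R" "t = rep Q1" "t' = rep Q2" unfolding T_def by blast
    then have "t' \<in> Q1" using in_quotient_imp_closed[OF assms(1) Q12(1) rep[OF Q12(1)]] \<open>(t,t') \<in> R\<close> by simp
    then have "Q1 = Q2" using quotient_disj[OF assms(1) Q12(1,2)] rep[OF Q12(2)] Q12(4) by blast
    then show "t = t'" using Q12 by simp
  qed
  moreover have "\<forall>s\<in>S. \<exists>t\<in>T. (s,t) \<in> R"
  proof
    fix s assume "s \<in> S"
    then have Q1: "R``{s} \<in> S//R" by (rule quotientI)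
    then have "rep (R``{s}) \<in> R``{s}" by (rule rep)
    then show "\<exists>t\<in>T. (s,t) \<in> R" unfolding T_def using Q1 by blast
  qed
  ultimately show ?thesis by blast
qed

lemma lower_bound:
  assumes "equiv S R" "finite S" "T \<subseteq> S" "\<forall>t\<in>T. \<forall>t'\<in>T. (t,t') \<in> R \<longrightarrow> t = t'"
  shows "card T \<le> card (S//R)"
proof -
  have fin: "finite (S//R)" using assms(1,2) by (simp add: equiv_type finite_quotient)
  have "inj_on (\<lambda>t. R``{t}) T"
  proof (rule inj_onI)
    fix t t' assume "t \<in> T" "t' \<in> T" "R``{t} = R``{t'}"
    moreover have "t' \<in> R``{t'}" using assms(1,3) \<open>t' \<in> T\<close> by (meson equiv_class_self subsetD)
    ultimately have "(t,t') \<in> R" by (metis Image_singleton_iff)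
    then show "t = t'" using assms(4) \<open>t \<in> T\<close> \<open>t' \<in> T\<close> by blast
  qed
  moreover have "(\<lambda>t. R``{t}) ` T \<subseteq> S//R" using assms(3) by (auto intro: quotientI)
  ultimately show ?thesis using fin by (rule card_inj_on_le)
qed

lemma upper_bound:
  assumes "equiv S R" "finite T" "T \<subseteq> S" "\<forall>s\<in>S. \<exists>t\<in>T. (s,t) \<in> R"
  shows "card (S//R) \<le> card T"
proof -
  have "S//R \<subseteq> (\<lambda>t. R``{t}) ` T"
  proof
    fix Q1 assume "Q1 \<in> S//R"
    then obtain s where s: "s \<in> S" "Q1 = R``{s}" by (auto elim: quotientE)
    then obtain t where "t \<in> T" "(s,t) \<in> R" using assms(4) by blast
    then have "Q1 = R``{t}" using s assms(1) by (simp add: equiv_class_eq)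
    then show "Q1 \<in> (\<lambda>t. R``{t}) ` T" using \<open>t \<in> T\<close> by blast
  qed
  then have "card (S//R) \<le> card ((\<lambda>t. R``{t}) ` T)" using assms(2) by (intro card_mono) auto
  also have "\<dots> \<le> card T" using assms(2) by (rule card_image_le)
  finally show ?thesis .
qed

lemma DirProd_group_fin:
  assumes "group H" "group K" "finite (carrier H)" "finite (carrier K)"
  shows "group (H \<times>\<times> K)" "finite (carrier (H \<times>\<times> K))"
  using DirProd_group[OF assms(1,2)] assms(3,4) by auto

lemma cyc_prod: "cyc (H \<times>\<times> K) (u,v) = (\<lambda>n::nat. (u [^]\<^bsub>H\<^esub> n, v [^]\<^bsub>K\<^esub> n)) ` UNIV"
  unfolding cyc_def by (simp add: DirProd_pow)

lemma fst_cyc: "fst ` cyc (H \<times>\<times> K) (u,v) = cyc H u"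
  unfolding cyc_prod cyc_def image_image by (simp add: DirProd_pow)

lemma snd_cyc: "snd ` cyc (H \<times>\<times> K) (u,v) = cyc K v"
  unfolding cyc_prod cyc_def image_image by (simp add: DirProd_pow)

lemma cyc_one:
  assumes "group H"
  shows "cyc H \<one>\<^bsub>H\<^esub> = {\<one>\<^bsub>H\<^esub>}"
  unfolding cyc_def using monoid.nat_pow_one[OF group.is_monoid[OF assms]] by auto

lemma conj_one_set:
  assumes "group H" "g \<in> carrier H"
  shows "conj_subset H g {\<one>\<^bsub>H\<^esub>} = {\<one>\<^bsub>H\<^esub>}"
  unfolding conj_subset_def using assms by (simp add: group.is_monoid monoid.r_one group.r_inv)

lemma conj_eq_one_set:
  assumes "group H" "g \<in> carrier H" "A \<subseteq> carrier H" "\<one>\<^bsub>H\<^esub> \<in> A" "conj_subset H g A = {\<one>\<^bsub>H\<^esub>}"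
  shows "A = {\<one>\<^bsub>H\<^esub>}"
proof -
  have "A = conj_subset H (inv\<^bsub>H\<^esub> g) (conj_subset H g A)" using conj_inv[OF assms(1,3,2)] by simp
  also have "\<dots> = {\<one>\<^bsub>H\<^esub>}" using assms(5) conj_one_set[OF assms(1)] assms(1,2) by (simp add: group.inv_closed)
  finally show ?thesis .
qed

lemma one_in_cyc:
  assumes "group H" "x \<in> carrier H"
  shows "\<one>\<^bsub>H\<^esub> \<in> cyc H x"
  unfolding cyc_def by (rule range_eqI[of _ _ 0]) simp

lemma one_in_mc:
  assumes "group H" "finite (carrier H)" "max_cyclic_subgroup H A"
  shows "\<one>\<^bsub>H\<^esub> \<in> A"
  using mc_cyc[OF assms] one_in_cyc[OF assms(1)] by blast

lemma mc_not_one: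
  assumes "group H" "finite (carrier H)" "max_cyclic_subgroup H A" "h \<in> carrier H" "h \<noteq> \<one>\<^bsub>H\<^esub>"
  shows "A \<noteq> {\<one>\<^bsub>H\<^esub>}"
proof
  assume "A = {\<one>\<^bsub>H\<^esub>}"
  then have "A \<subseteq> cyc H h" using one_in_cyc[OF assms(1,4)] by simp
  then have "cyc H h = A" using mc_eq[OF assms(1,2,3) _ assms(4)] by simp
  then show False using cyc_self[OF assms(1,4)] assms(5) \<open>A = _\<close> by simp
qed

lemma nontriv_elem:
  assumes "group H" "finite (carrier H)" "order H > 1"
  shows "\<exists>h\<in>carrier H. h \<noteq> \<one>\<^bsub>H\<^esub>"
proof (rule ccontr)
  assume "\<not> ?thesis"
  then have "carrier H \<subseteq> {\<one>\<^bsub>H\<^esub>}" by auto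
  then have "order H \<le> 1" unfolding order_def using card_mono[of "{\<one>\<^bsub>H\<^esub>}" "carrier H"] by simp
  then show False using assms(3) by simp
qed

lemma cauchy:
  fixes G (structure)
  assumes "group G" "finite (carrier G)" "Factorial_Ring.prime p" "p dvd order G"
  shows "\<exists>y\<in>carrier G. group.ord G y = p"
proof -
  interpret group G by fact
  have "order G = p ^ 1 * (order G div p)" using assms(4) by simp
  then obtain P where P: "subgroup P G" "card P = p"
    using sylow_thm[OF assms(3,1) \<open>order G = _\<close> assms(2)] by auto
  have "p > 1" using assms(3) prime_gt_1_nat by blast
  have "\<one> \<in> P" using P(1) subgroup.one_closed by fastforce
  obtain x where x: "x \<in> P" "x \<noteq> \<one>"
  proof (rule ccontr)
    assume "\<not> thesis"
    with that have "P \<subseteq> {\<one>}" by blast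
    then have "card P \<le> 1" using card_mono[of "{\<one>}" P] by simp
    then show False using P(2) \<open>p > 1\<close> by simp
  qed
  have xc: "x \<in> carrier G" using x P(1) subgroup.subset by blast
  interpret PG: group "G\<lparr>carrier := P\<rparr>" using subgroup_imp_group[OF P(1)] .
  have "x [^]\<^bsub>G\<lparr>carrier := P\<rparr>\<^esub> (order (G\<lparr>carrier := P\<rparr>)) = \<one>\<^bsub>G\<lparr>carrier := P\<rparr>\<^esub>"
    using PG.pow_order_eq_1 x(1) by simp
  then have "x [^] p = \<one>" using P(2) unfolding order_def by (simp flip: nat_pow_consistent)
  then have "ord x dvd p" using pow_eq_id[OF xc] by simp
  moreover have "ord x \<noteq> 1" using ord_eq_1[OF xc] x(2) by simp
  ultimately have "ord x = p" using assms(3) unfolding prime_nat_iff by auto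
  then show ?thesis using xc by blast
qed

lemma not_dvd_k:
  fixes K (structure)
  assumes "group K" "b \<in> carrier K" "v \<in> carrier K" "v [^]\<^bsub>K\<^esub> (k::nat) = b" "v = b [^]\<^bsub>K\<^esub> (m::nat)"
    "Factorial_Ring.prime p" "p dvd group.ord K b"
  shows "\<not> p dvd k"
proof
  interpret group K by fact
  assume "p dvd k"
  have "b [^] (m*k) = b [^] (1::nat)" using assms(2,4,5) by (simp add: nat_pow_pow)
  then have "b [^] (int (m*k)) = b [^] (int 1)" by (simp only: int_pow_int)
  then have "int (ord b) dvd int 1 - int (m*k)" using int_pow_eq[OF assms(2)] by blast
  then have "int p dvd int 1 - int (m*k)" using assms(7) by (meson dvd_trans of_nat_dvd_iff)
  moreover have "int p dvd int (m*k)" using \<open>p dvd k\<close> by simp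
  ultimately have "int p dvd 1" by (metis dvd_add_left_iff diff_add_cancel of_nat_1)
  then show False using assms(6) by (metis of_nat_dvd_iff of_nat_1 not_prime_1 nat_dvd_1_iff_1)
qed

lemma pgroup_one:
  assumes "group H" "finite (carrier H)" "u \<in> carrier H" "order H = p ^ n" "Factorial_Ring.prime p"
    "u [^]\<^bsub>H\<^esub> (k::nat) = \<one>\<^bsub>H\<^esub>" "\<not> p dvd k"
  shows "u = \<one>\<^bsub>H\<^esub>"
proof -
  interpret group H by fact
  have "ord u dvd k" using pow_eq_id[OF assms(3)] assms(6) by simp
  moreover have "ord u dvd p ^ n" using ord_dvd_group_order[OF assms(3)] assms(4) by simp
  moreover have "coprime p k" using assms(5,7) by (simp add: prime_imp_coprime)
  then have "coprime k (p ^ n)" by (simp add: coprime_commute)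
  ultimately have "ord u = 1" by (meson coprime_common_divisor_nat coprime_commute)
  then show ?thesis using ord_eq_1[OF assms(3)] by simp
qed

definition FF :: "('a, 'c) monoid_scheme \<Rightarrow> ('b, 'd) monoid_scheme \<Rightarrow> 'a set \<Rightarrow> 'b set \<Rightarrow> ('a \<times> 'b) set" where
  "FF H K A B = (SOME C. max_cyclic_subgroup (H \<times>\<times> K) C \<and> fst ` C = A \<and> snd ` C = B)"

lemma FF_prop:
  assumes "group H" "group K" "finite (carrier H)" "finite (carrier K)"
    "max_cyclic_subgroup H A" "max_cyclic_subgroup K B"
  shows "max_cyclic_subgroup (H \<times>\<times> K) (FF H K A B) \<and> fst ` FF H K A B = A \<and> snd ` FF H K A B = B"
proof -
  note G = DirProd_group_fin[OF assms(1-4)]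
  obtain a where a: "a \<in> carrier H" "A = cyc H a" using mc_cyc[OF assms(1,3,5)] by blast
  obtain b where b: "b \<in> carrier K" "B = cyc K b" using mc_cyc[OF assms(2,4,6)] by blast
  obtain C where C: "max_cyclic_subgroup (H \<times>\<times> K) C" "cyc (H \<times>\<times> K) (a,b) \<subseteq> C"
    using exists_mc[OF G, of "(a,b)"] a b by auto
  obtain w where w: "w \<in> carrier (H \<times>\<times> K)" "C = cyc (H \<times>\<times> K) w" using mc_cyc[OF G C(1)] by blast
  obtain u v where uv: "w = (u,v)" "u \<in> carrier H" "v \<in> carrier K" using w(1) by auto
  have "A \<subseteq> cyc H u" using C(2) w(2) uv(1) fst_cyc[of H K a b] fst_cyc[of H K u v] a(2) by (metis image_mono)
  then have "cyc H u = A" using mc_eq[OF assms(1,3,5) _ uv(2)] by blast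
  moreover have "B \<subseteq> cyc K v" using C(2) w(2) uv(1) snd_cyc[of H K a b] snd_cyc[of H K u v] b(2) by (metis image_mono)
  then have "cyc K v = B" using mc_eq[OF assms(2,4,6) _ uv(3)] by blast
  ultimately have "max_cyclic_subgroup (H \<times>\<times> K) C \<and> fst ` C = A \<and> snd ` C = B"
    using C(1) w(2) uv(1) fst_cyc snd_cyc by metis
  then show ?thesis unfolding FF_def by (rule someI)
qed

lemma conj_prod:
  assumes "group H" "group K" "g \<in> carrier H" "k \<in> carrier K"
  shows "conj_subset (H \<times>\<times> K) (g,k) C = (\<lambda>(x,y). (g \<otimes>\<^bsub>H\<^esub> x \<otimes>\<^bsub>H\<^esub> inv\<^bsub>H\<^esub> g, k \<otimes>\<^bsub>K\<^esub> y \<otimes>\<^bsub>K\<^esub> inv\<^bsub>K\<^esub> k)) ` C"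
proof -
  have "\<And>z. (g,k) \<otimes>\<^bsub>H \<times>\<times> K\<^esub> z \<otimes>\<^bsub>H \<times>\<times> K\<^esub> inv\<^bsub>H \<times>\<times> K\<^esub> (g,k) =
     (\<lambda>(x,y). (g \<otimes>\<^bsub>H\<^esub> x \<otimes>\<^bsub>H\<^esub> inv\<^bsub>H\<^esub> g, k \<otimes>\<^bsub>K\<^esub> y \<otimes>\<^bsub>K\<^esub> inv\<^bsub>K\<^esub> k)) z"
    by (simp add: inv_DirProd[OF assms] split: prod.split)
  then show ?thesis unfolding conj_subset_def by simp
qed

lemma conj_fst:
  assumes "group H" "group K" "g \<in> carrier H" "k \<in> carrier K"
  shows "fst ` conj_subset (H \<times>\<times> K) (g,k) C = conj_subset H g (fst ` C)"
  by (simp only: conj_prod[OF assms]) (simp add: conj_subset_def image_image case_prod_beta)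

lemma conj_snd:
  assumes "group H" "group K" "g \<in> carrier H" "k \<in> carrier K"
  shows "snd ` conj_subset (H \<times>\<times> K) (g,k) C = conj_subset K k (snd ` C)"
  by (simp only: conj_prod[OF assms]) (simp add: conj_subset_def image_image case_prod_beta)

lemma conj_times:
  assumes "group H" "group K" "g \<in> carrier H" "k \<in> carrier K"
  shows "conj_subset (H \<times>\<times> K) (g,k) (P1 \<times> P2) = conj_subset H g P1 \<times> conj_subset K k P2"
proof -
  have "conj_subset (H \<times>\<times> K) (g,k) (P1 \<times> P2) = (\<lambda>(x,y). (g \<otimes>\<^bsub>H\<^esub> x \<otimes>\<^bsub>H\<^esub> inv\<^bsub>H\<^esub> g, k \<otimes>\<^bsub>K\<^esub> y \<otimes>\<^bsub>K\<^esub> inv\<^bsub>K\<^esub> k)) ` (P1 \<times> P2)"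
    by (rule conj_prod[OF assms])
  also have "\<dots> = conj_subset H g P1 \<times> conj_subset K k P2"
    unfolding conj_subset_def by (rule image_paired_Times)
  finally show ?thesis .
qed

lemma rel_proj:
  assumes "group H" "group K" "(C, D) \<in> subset_conj_rel (H \<times>\<times> K) S"
  shows "\<exists>g\<in>carrier H. \<exists>k\<in>carrier K. D = conj_subset (H \<times>\<times> K) (g,k) C \<and>
     fst ` D = conj_subset H g (fst ` C) \<and> snd ` D = conj_subset K k (snd ` C)"
proof -
  obtain z where z: "z \<in> carrier (H \<times>\<times> K)" "D = conj_subset (H \<times>\<times> K) z C"
    using assms(3) unfolding subset_conj_rel_def by auto
  obtain g k where "z = (g,k)" "g \<in> carrier H" "k \<in> carrier K" using z(1) by auto
  then show ?thesis using z(2) conj_fst[OF assms(1,2)] conj_snd[OF assms(1,2)] by blast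
qed

lemma conj_pow:
  fixes G (structure)
  assumes "group G" "g \<in> carrier G" "w \<in> carrier G"
  shows "(g \<otimes> w \<otimes> inv g) [^] (n::nat) = g \<otimes> w [^] n \<otimes> inv g"
proof -
  interpret group G by fact
  show ?thesis
  proof (induct n)
    case 0 then show ?case using assms by simp
  next
    case (Suc n)
    have "(g \<otimes> w \<otimes> inv g) [^] Suc n = g \<otimes> w [^] n \<otimes> inv g \<otimes> (g \<otimes> w \<otimes> inv g)" using Suc by simp
    also have "\<dots> = g \<otimes> (w [^] n \<otimes> w) \<otimes> inv g" using assms by (simp add: m_assoc) (simp add: m_assoc[symmetric])
    finally show ?case by simp
  qed
qed

lemma conj_cyc:
  fixes G (structure)
  assumes "group G" "g \<in> carrier G" "w \<in> carrier G"
  shows "conj_subset G g (cyc G w) = cyc G (g \<otimes> w \<otimes> inv g)"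
  unfolding conj_subset_def cyc_def image_image conj_pow[OF assms] ..

lemma conj_card:
  fixes G (structure)
  assumes "group G" "g \<in> carrier G" "A \<subseteq> carrier G"
  shows "card (conj_subset G g A) = card A"
proof -
  interpret group G by fact
  have "inj_on (\<lambda>a. g \<otimes> a \<otimes> inv g) A"
    by (rule inj_onI) (use assms in \<open>metis inv_closed l_cancel r_cancel m_closed subsetD\<close>)
  then show ?thesis unfolding conj_subset_def by (rule card_image)
qed

lemma conj_inj:
  fixes G (structure)
  assumes "group G" "g \<in> carrier G"
  shows "inj_on (\<lambda>a. g \<otimes> a \<otimes> inv g) (carrier G)"
proof -
  interpret group G by fact
  show ?thesis by (rule inj_onI) (use assms in auto)
qed

lemma cyc_one_left:
  assumes "group H"
  shows "cyc (H \<times>\<times> K) (\<one>\<^bsub>H\<^esub>, x) = {\<one>\<^bsub>H\<^esub>} \<times> cyc K x"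
  unfolding cyc_prod using monoid.nat_pow_one[OF group.is_monoid[OF assms]] by (auto simp: cyc_def)

lemma cyc_one_right:
  assumes "group K"
  shows "cyc (H \<times>\<times> K) (x, \<one>\<^bsub>K\<^esub>) = cyc H x \<times> {\<one>\<^bsub>K\<^esub>}"
  unfolding cyc_prod using monoid.nat_pow_one[OF group.is_monoid[OF assms]] by (auto simp: cyc_def)

lemma E_max:
  assumes "group H" "group K" "finite (carrier H)" "finite (carrier K)" "Factorial_Ring.prime p"
    "order H = p ^ n" "max_cyclic_subgroup K B" "p dvd card B"
  shows "max_cyclic_subgroup (H \<times>\<times> K) ({\<one>\<^bsub>H\<^esub>} \<times> B)"
proof -
  note G = DirProd_group_fin[OF assms(1-4)]
  obtain b where b: "b \<in> carrier K" "B = cyc K b" using mc_cyc[OF assms(2,4,7)] by blast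
  have one: "\<one>\<^bsub>H\<^esub> \<in> carrier H" using assms(1) by (simp add: group.is_monoid monoid.one_closed)
  have eq: "{\<one>\<^bsub>H\<^esub>} \<times> B = cyc (H \<times>\<times> K) (\<one>\<^bsub>H\<^esub>, b)" using cyc_one_left[OF assms(1), of K b] b(2) by simp
  show ?thesis unfolding max_cyclic_subgroup_def
  proof (intro conjI notI)
    show "cyclic_subgroup (H \<times>\<times> K) ({\<one>\<^bsub>H\<^esub>} \<times> B)"
      using cyclic_iff[OF G] eq one b(1) by auto
    assume "\<exists>D. cyclic_subgroup (H \<times>\<times> K) D \<and> {\<one>\<^bsub>H\<^esub>} \<times> B \<subset> D"
    then obtain D where D: "cyclic_subgroup (H \<times>\<times> K) D" "{\<one>\<^bsub>H\<^esub>} \<times> B \<subset> D" by blast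
    obtain w where w: "w \<in> carrier (H \<times>\<times> K)" "D = cyc (H \<times>\<times> K) w" using D(1) cyclic_iff[OF G] by blast
    obtain u v where uv: "w = (u,v)" "u \<in> carrier H" "v \<in> carrier K" using w(1) by auto
    have "(\<one>\<^bsub>H\<^esub>, b) \<in> D" using D(2) cyc_self[OF assms(2) b(1)] b(2) by blast
    then obtain k where k: "u [^]\<^bsub>H\<^esub> (k::nat) = \<one>\<^bsub>H\<^esub>" "v [^]\<^bsub>K\<^esub> k = b"
      using w(2) uv(1) by (auto simp: cyc_prod)
    have "B \<subseteq> snd ` D" using D(2) by force
    then have "B \<subseteq> cyc K v" using w(2) uv(1) snd_cyc by metis
    then have vB: "cyc K v = B" using mc_eq[OF assms(2,4,7) _ uv(3)] by blast
    then obtain m where m: "v = b [^]\<^bsub>K\<^esub> (m::nat)" using cyc_self[OF assms(2) uv(3)] b(2) unfolding cyc_def by auto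
    have "p dvd group.ord K b" using assms(8) b card_cyc[OF assms(2,4) b(1)] by simp
    then have "\<not> p dvd k" using not_dvd_k[OF assms(2) b(1) uv(3) k(2) m assms(5)] by blast
    then have "u = \<one>\<^bsub>H\<^esub>" using pgroup_one[OF assms(1,3) uv(2) assms(6,5) k(1)] by blast
    then have "D = {\<one>\<^bsub>H\<^esub>} \<times> B" using w(2) uv(1) cyc_one_left[OF assms(1), of K v] vB by simp
    then show False using D(2) by simp
  qed
qed

lemma E'_max:
  assumes "group H" "group K" "finite (carrier H)" "finite (carrier K)" "Factorial_Ring.prime p"
    "order K = p ^ n" "max_cyclic_subgroup H A" "p dvd card A"
  shows "max_cyclic_subgroup (H \<times>\<times> K) (A \<times> {\<one>\<^bsub>K\<^esub>})"
proof -
  note G = DirProd_group_fin[OF assms(1-4)]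
  obtain a where a: "a \<in> carrier H" "A = cyc H a" using mc_cyc[OF assms(1,3,7)] by blast
  have one: "\<one>\<^bsub>K\<^esub> \<in> carrier K" using assms(2) by (simp add: group.is_monoid monoid.one_closed)
  have eq: "A \<times> {\<one>\<^bsub>K\<^esub>} = cyc (H \<times>\<times> K) (a, \<one>\<^bsub>K\<^esub>)" using cyc_one_right[OF assms(2), of H a] a(2) by simp
  show ?thesis unfolding max_cyclic_subgroup_def
  proof (intro conjI notI)
    show "cyclic_subgroup (H \<times>\<times> K) (A \<times> {\<one>\<^bsub>K\<^esub>})"
      using cyclic_iff[OF G] eq one a(1) by auto
    assume "\<exists>D. cyclic_subgroup (H \<times>\<times> K) D \<and> A \<times> {\<one>\<^bsub>K\<^esub>} \<subset> D"
    then obtain D where D: "cyclic_subgroup (H \<times>\<times> K) D" "A \<times> {\<one>\<^bsub>K\<^esub>} \<subset> D" by blast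
    obtain w where w: "w \<in> carrier (H \<times>\<times> K)" "D = cyc (H \<times>\<times> K) w" using D(1) cyclic_iff[OF G] by blast
    obtain u v where uv: "w = (u,v)" "u \<in> carrier H" "v \<in> carrier K" using w(1) by auto
    have "(a, \<one>\<^bsub>K\<^esub>) \<in> D" using D(2) cyc_self[OF assms(1) a(1)] a(2) by blast
    then obtain k where k: "v [^]\<^bsub>K\<^esub> (k::nat) = \<one>\<^bsub>K\<^esub>" "u [^]\<^bsub>H\<^esub> k = a"
      using w(2) uv(1) by (auto simp: cyc_prod)
    have "A \<subseteq> fst ` D" using D(2) by force
    then have "A \<subseteq> cyc H u" using w(2) uv(1) fst_cyc by metis
    then have uA: "cyc H u = A" using mc_eq[OF assms(1,3,7) _ uv(2)] by blast
    then obtain m where m: "u = a [^]\<^bsub>H\<^esub> (m::nat)" using cyc_self[OF assms(1) uv(2)] a(2) unfolding cyc_def by auto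
    have "p dvd group.ord H a" using assms(8) a card_cyc[OF assms(1,3) a(1)] by simp
    then have "\<not> p dvd k" using not_dvd_k[OF assms(1) a(1) uv(2) k(2) m assms(5)] by blast
    then have "v = \<one>\<^bsub>K\<^esub>" using pgroup_one[OF assms(2,4) uv(3) assms(6,5) k(1)] by blast
    then have "D = A \<times> {\<one>\<^bsub>K\<^esub>}" using w(2) uv(1) cyc_one_right[OF assms(2), of H u] uA by simp
    then show False using D(2) by simp
  qed
qed

lemma pow_red:
  fixes G (structure)
  assumes "group G" "u \<in> carrier G"
  shows "u [^] (group.ord G u * y + r) = u [^] (r::nat)"
proof -
  interpret group G by fact
  have 1: "u [^] (ord u * y) = \<one>" using nat_pow_pow[OF assms(2), of "ord u" y] assms(2) by simp
  show ?thesis using nat_pow_mult[OF assms(2), of "ord u * y" r] 1 assms by simp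
qed

lemma cyc_coprime:
  assumes "group H" "group K" "finite (carrier H)" "finite (carrier K)"
    "u \<in> carrier H" "v \<in> carrier K" "coprime (group.ord H u) (group.ord K v)"
  shows "cyc (H \<times>\<times> K) (u,v) = cyc H u \<times> cyc K v"
proof
  show "cyc (H \<times>\<times> K) (u,v) \<subseteq> cyc H u \<times> cyc K v" unfolding cyc_prod by (auto simp: cyc_def)
  define a where "a = group.ord H u"
  define b where "b = group.ord K v"
  have a0: "a \<noteq> 0" using group.ord_ge_1[OF assms(1,3,5)] a_def by simp
  have b0: "b \<noteq> 0" using group.ord_ge_1[OF assms(2,4,6)] b_def by simp
  have g1: "gcd b a = 1" "gcd a b = 1" using assms(7) a_def b_def by (simp_all add: coprime_iff_gcd_eq_1 gcd.commute)
  obtain x y where xy: "b * x = a * y + 1" using bezout_nat[OF b0, of a] g1 by auto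
  obtain s t where st: "a * s = b * t + 1" using bezout_nat[OF a0, of b] g1 by auto
  show "cyc H u \<times> cyc K v \<subseteq> cyc (H \<times>\<times> K) (u,v)"
  proof
    fix z assume "z \<in> cyc H u \<times> cyc K v"
    then obtain i j where z: "z = (u [^]\<^bsub>H\<^esub> (i::nat), v [^]\<^bsub>K\<^esub> (j::nat))" unfolding cyc_def by auto
    define N where "N = b * x * i + a * s * j"
    have e1: "b * x * i = (a * y + 1) * i" using xy by simp
    have e2: "a * s * j = (b * t + 1) * j" using st by simp
    have N1: "N = a * (y * i + s * j) + i" unfolding N_def e1 by (simp add: algebra_simps)
    have N2: "N = b * (x * i + t * j) + j" unfolding N_def e2 by (simp add: algebra_simps)
    have "u [^]\<^bsub>H\<^esub> N = u [^]\<^bsub>H\<^esub> i" unfolding N1 a_def by (rule pow_red[OF assms(1,5)])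
    moreover have "v [^]\<^bsub>K\<^esub> N = v [^]\<^bsub>K\<^esub> j" unfolding N2 b_def by (rule pow_red[OF assms(2,6)])
    ultimately show "z \<in> cyc (H \<times>\<times> K) (u,v)" unfolding cyc_prod z by (metis rangeI)
  qed
qed

definition pw :: "('x \<times> 'x) set \<Rightarrow> 'x set \<Rightarrow> bool" where
  "pw R T \<longleftrightarrow> (\<forall>t\<in>T. \<forall>t'\<in>T. (t,t') \<in> R \<longrightarrow> t = t')"

abbreviation MC where "MC Gx \<equiv> max_cyclic_subgroups Gx"
abbreviation RC where "RC Gx \<equiv> subset_conj_rel Gx (max_cyclic_subgroups Gx)"

lemma mcs_fin:
  assumes "group Gx" "finite (carrier Gx)"
  shows "finite (MC Gx)" "equiv (MC Gx) (RC Gx)"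
proof -
  have "MC Gx \<subseteq> Pow (carrier Gx)" using mc_sub[OF assms] unfolding max_cyclic_subgroups_def by auto
  moreover have "finite (Pow (carrier Gx))" using assms(2) by simp
  ultimately show "finite (MC Gx)" by (rule finite_subset)
  show "equiv (MC Gx) (RC Gx)"
    by (rule equiv_conj[OF assms(1)]) (use mc_sub[OF assms] in \<open>auto simp: max_cyclic_subgroups_def\<close>)
qed

lemma eta_lower:
  assumes "group Gx" "finite (carrier Gx)" "T \<subseteq> MC Gx" "pw (RC Gx) T"
  shows "card T \<le> eta Gx"
  using lower_bound[OF mcs_fin(2)[OF assms(1,2)] mcs_fin(1)[OF assms(1,2)] assms(3) assms(4)[unfolded pw_def]]
  unfolding eta_def .

lemma transv:
  assumes "group Gx" "finite (carrier Gx)"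
  shows "\<exists>T\<subseteq>MC Gx. card T = eta Gx \<and> pw (RC Gx) T \<and> (\<forall>s\<in>MC Gx. \<exists>t\<in>T. (s,t) \<in> RC Gx)"
  using transversal[OF mcs_fin(2)[OF assms] mcs_fin(1)[OF assms]] unfolding eta_def pw_def .

lemma pw_union:
  assumes "pw R A" "pw R B" "\<forall>a\<in>A. \<forall>b\<in>B. (a,b) \<notin> R \<and> (b,a) \<notin> R"
  shows "pw R (A \<union> B)"
  using assms unfolding pw_def by blast

lemma rel_sym:
  assumes "group Gx" "finite (carrier Gx)" "(C,D) \<in> RC Gx"
  shows "(D,C) \<in> RC Gx"
  using mcs_fin(2)[OF assms(1,2)] assms(3) unfolding equiv_def sym_def by blast

lemma conj_max:
  assumes "group H" "finite (carrier H)" "max_cyclic_subgroup H A" "g \<in> carrier H"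
  shows "max_cyclic_subgroup H (conj_subset H g A)"
proof -
  interpret group H by fact
  obtain a where a: "a \<in> carrier H" "A = cyc H a" using mc_cyc[OF assms(1-3)] by blast
  have c: "conj_subset H g A = cyc H (g \<otimes>\<^bsub>H\<^esub> a \<otimes>\<^bsub>H\<^esub> inv\<^bsub>H\<^esub> g)" using conj_cyc[OF assms(1,4) a(1)] a(2) by simp
  show ?thesis unfolding max_cyclic_subgroup_def
  proof (intro conjI notI)
    have "g \<otimes>\<^bsub>H\<^esub> a \<otimes>\<^bsub>H\<^esub> inv\<^bsub>H\<^esub> g \<in> carrier H" using a(1) assms(4) by simp
    then show "cyclic_subgroup H (conj_subset H g A)" unfolding c using cyclic_iff[OF assms(1,2)] by blast
    assume "\<exists>D. cyclic_subgroup H D \<and> conj_subset H g A \<subset> D"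
    then obtain D where D: "cyclic_subgroup H D" "conj_subset H g A \<subset> D" by blast
    obtain w where w0: "w \<in> carrier H" "D = cyc H w" using D(1) cyclic_iff[OF assms(1,2)] by auto
    have w: "w \<in> carrier H" "conj_subset H g A \<subset> cyc H w" using w0 D(2) by auto
    have ig: "inv\<^bsub>H\<^esub> g \<in> carrier H" using assms(4) by simp
    have inj: "inj_on (\<lambda>x. inv\<^bsub>H\<^esub> g \<otimes>\<^bsub>H\<^esub> x \<otimes>\<^bsub>H\<^esub> inv\<^bsub>H\<^esub> (inv\<^bsub>H\<^esub> g)) (cyc H w)"
      by (rule inj_on_subset[OF conj_inj[OF assms(1) ig] cyc_sub[OF assms(1) w(1)]])
    have "conj_subset H (inv\<^bsub>H\<^esub> g) (conj_subset H g A) \<subset> conj_subset H (inv\<^bsub>H\<^esub> g) (cyc H w)"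
      unfolding conj_subset_def[of H "inv\<^bsub>H\<^esub> g"] by (rule image_strict_mono[OF inj w(2)])
    moreover have e1: "conj_subset H (inv\<^bsub>H\<^esub> g) (conj_subset H g A) = A"
      by (rule conj_inv[OF assms(1) mc_sub[OF assms(1-3)] assms(4)])
    moreover have e2: "conj_subset H (inv\<^bsub>H\<^esub> g) (cyc H w) = cyc H (inv\<^bsub>H\<^esub> g \<otimes>\<^bsub>H\<^esub> w \<otimes>\<^bsub>H\<^esub> inv\<^bsub>H\<^esub> (inv\<^bsub>H\<^esub> g))"
      by (rule conj_cyc[OF assms(1) ig w(1)])
    ultimately have lt: "A \<subset> cyc H (inv\<^bsub>H\<^esub> g \<otimes>\<^bsub>H\<^esub> w \<otimes>\<^bsub>H\<^esub> inv\<^bsub>H\<^esub> (inv\<^bsub>H\<^esub> g))" by simp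
    have wc: "inv\<^bsub>H\<^esub> g \<otimes>\<^bsub>H\<^esub> w \<otimes>\<^bsub>H\<^esub> inv\<^bsub>H\<^esub> (inv\<^bsub>H\<^esub> g) \<in> carrier H" using ig w(1) by simp
    have "cyclic_subgroup H (cyc H (inv\<^bsub>H\<^esub> g \<otimes>\<^bsub>H\<^esub> w \<otimes>\<^bsub>H\<^esub> inv\<^bsub>H\<^esub> (inv\<^bsub>H\<^esub> g)))"
      using cyclic_iff[OF assms(1,2)] wc by blast
    then show False using assms(3) lt unfolding max_cyclic_subgroup_def by blast
  qed
qed

lemma rel_mem:
  assumes "(C,D) \<in> subset_conj_rel G S"
  shows "C \<in> S" "D \<in> S"
  using assms unfolding subset_conj_rel_def by auto

lemma proj_rel:
  assumes "group H" "group K" "finite (carrier H)" "finite (carrier K)" "(C,D) \<in> RC (H \<times>\<times> K)"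
  shows "(fst ` C = {\<one>\<^bsub>H\<^esub>} \<longrightarrow> fst ` D = {\<one>\<^bsub>H\<^esub>})
       \<and> (snd ` C = {\<one>\<^bsub>K\<^esub>} \<longrightarrow> snd ` D = {\<one>\<^bsub>K\<^esub>})
       \<and> (max_cyclic_subgroup H (fst ` C) \<longrightarrow> max_cyclic_subgroup H (fst ` D))
       \<and> (max_cyclic_subgroup K (snd ` C) \<longrightarrow> max_cyclic_subgroup K (snd ` D))"
proof -
  obtain g k where gk: "g \<in> carrier H" "k \<in> carrier K"
    "fst ` D = conj_subset H g (fst ` C)" "snd ` D = conj_subset K k (snd ` C)"
    using rel_proj[OF assms(1,2,5)] by blast
  have 1: "fst ` C = {\<one>\<^bsub>H\<^esub>} \<longrightarrow> fst ` D = {\<one>\<^bsub>H\<^esub>}"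
    using gk(3) conj_one_set[OF assms(1) gk(1)] by simp
  have 2: "snd ` C = {\<one>\<^bsub>K\<^esub>} \<longrightarrow> snd ` D = {\<one>\<^bsub>K\<^esub>}"
    using gk(4) conj_one_set[OF assms(2) gk(2)] by simp
  have 3: "max_cyclic_subgroup H (fst ` C) \<longrightarrow> max_cyclic_subgroup H (fst ` D)"
    using gk(3) conj_max[OF assms(1,3) _ gk(1)] by simp
  have 4: "max_cyclic_subgroup K (snd ` C) \<longrightarrow> max_cyclic_subgroup K (snd ` D)"
    using gk(4) conj_max[OF assms(2,4) _ gk(2)] by simp
  show ?thesis using 1 2 3 4 by (intro conjI)
qed

lemma proj_rel_iff:
  assumes "group H" "group K" "finite (carrier H)" "finite (carrier K)" "(C,D) \<in> RC (H \<times>\<times> K)"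
  shows "(fst ` C = {\<one>\<^bsub>H\<^esub>} \<longleftrightarrow> fst ` D = {\<one>\<^bsub>H\<^esub>})
       \<and> (snd ` C = {\<one>\<^bsub>K\<^esub>} \<longleftrightarrow> snd ` D = {\<one>\<^bsub>K\<^esub>})
       \<and> (max_cyclic_subgroup H (fst ` C) \<longleftrightarrow> max_cyclic_subgroup H (fst ` D))
       \<and> (max_cyclic_subgroup K (snd ` C) \<longleftrightarrow> max_cyclic_subgroup K (snd ` D))"
proof -
  note G = DirProd_group_fin[OF assms(1-4)]
  have "(D,C) \<in> RC (H \<times>\<times> K)" using rel_sym[OF G assms(5)] .
  note a = proj_rel[OF assms(1-4) assms(5)]
  note b = proj_rel[OF assms(1-4) \<open>(D,C) \<in> _\<close>]
  show ?thesis using a b by (intro conjI iffI) simp_all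
qed

lemma T1_lemma:
  assumes "group H" "group K" "finite (carrier H)" "finite (carrier K)"
    "TA \<subseteq> MC H" "TB \<subseteq> MC K" "pw (RC H) TA" "pw (RC K) TB"
  defines "T1 \<equiv> (\<lambda>(A,B). FF H K A B) ` (TA \<times> TB)"
  shows "T1 \<subseteq> MC (H \<times>\<times> K)" "card T1 = card TA * card TB" "pw (RC (H \<times>\<times> K)) T1"
    "\<forall>C\<in>T1. max_cyclic_subgroup H (fst ` C) \<and> max_cyclic_subgroup K (snd ` C)"
proof -
  have FP: "max_cyclic_subgroup (H \<times>\<times> K) (FF H K A B) \<and> fst ` FF H K A B = A \<and> snd ` FF H K A B = B"
    if "A \<in> TA" "B \<in> TB" for A B
    using FF_prop[OF assms(1-4)] that assms(5,6) unfolding max_cyclic_subgroups_def by blast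
  show "T1 \<subseteq> MC (H \<times>\<times> K)" unfolding T1_def max_cyclic_subgroups_def using FP by auto
  have inj: "inj_on (\<lambda>(A,B). FF H K A B) (TA \<times> TB)"
  proof (rule inj_onI)
    fix x y assume "x \<in> TA \<times> TB" "y \<in> TA \<times> TB" "(\<lambda>(A,B). FF H K A B) x = (\<lambda>(A,B). FF H K A B) y"
    then obtain A B A' B' where xy: "x = (A,B)" "y = (A',B')" "A \<in> TA" "B \<in> TB" "A' \<in> TA" "B' \<in> TB"
      "FF H K A B = FF H K A' B'" by auto
    have "A = A'" using FP[OF xy(3,4)] FP[OF xy(5,6)] xy(7) by metis
    moreover have "B = B'" using FP[OF xy(3,4)] FP[OF xy(5,6)] xy(7) by metis
    ultimately show "x = y" using xy by simp
  qed
  have finA: "finite TA" using mcs_fin(1)[OF assms(1,3)] assms(5) finite_subset by blast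
  have finB: "finite TB" using mcs_fin(1)[OF assms(2,4)] assms(6) finite_subset by blast
  show "card T1 = card TA * card TB" unfolding T1_def card_image[OF inj] card_cartesian_product ..
  show "\<forall>C\<in>T1. max_cyclic_subgroup H (fst ` C) \<and> max_cyclic_subgroup K (snd ` C)"
    unfolding T1_def using FP assms(5,6) unfolding max_cyclic_subgroups_def by auto
  show "pw (RC (H \<times>\<times> K)) T1"
    unfolding pw_def
  proof (intro ballI impI)
    fix C D assume CD: "C \<in> T1" "D \<in> T1" "(C,D) \<in> RC (H \<times>\<times> K)"
    obtain A B where AB: "A \<in> TA" "B \<in> TB" "C = FF H K A B" using CD(1) unfolding T1_def by auto
    obtain A' B' where AB': "A' \<in> TA" "B' \<in> TB" "D = FF H K A' B'" using CD(2) unfolding T1_def by auto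
    obtain g k where gk: "g \<in> carrier H" "k \<in> carrier K"
      "fst ` D = conj_subset H g (fst ` C)" "snd ` D = conj_subset K k (snd ` C)"
      using rel_proj[OF assms(1,2) CD(3)] by blast
    have "(A, A') \<in> RC H" using gk(1,3) FP AB AB' assms(5) unfolding subset_conj_rel_def by auto
    then have "A = A'" using assms(7) AB(1) AB'(1) unfolding pw_def by blast
    moreover have "(B, B') \<in> RC K" using gk(2,4) FP AB AB' assms(6) unfolding subset_conj_rel_def by auto
    then have "B = B'" using assms(8) AB(2) AB'(2) unfolding pw_def by blast
    ultimately show "C = D" using AB AB' by simp
  qed
qed

lemma part_i:
  assumes "group H" "group K" "finite (carrier H)" "finite (carrier K)"
  shows "eta H * eta K \<le> eta (H \<times>\<times> K)"
proof -
  obtain TA where TA: "TA \<subseteq> MC H" "card TA = eta H" "pw (RC H) TA" using transv[OF assms(1,3)] by blast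
  obtain TB where TB: "TB \<subseteq> MC K" "card TB = eta K" "pw (RC K) TB" using transv[OF assms(2,4)] by blast
  note T = T1_lemma[OF assms TA(1) TB(1) TA(3) TB(3)]
  show ?thesis using eta_lower[OF DirProd_group_fin[OF assms] T(1) T(3)] T(2) TA(2) TB(2) by simp
qed

lemma ord_dvd_card_mc:
  fixes K (structure)
  assumes "group K" "finite (carrier K)" "max_cyclic_subgroup K C" "y \<in> C"
  shows "group.ord K y dvd card C"
proof -
  interpret group K by fact
  obtain c where c: "c \<in> carrier K" "C = cyc K c" using mc_cyc[OF assms(1-3)] by blast
  obtain j where j: "y = c [^] (j::nat)" using assms(4) c(2) unfolding cyc_def by auto
  have yc: "y \<in> carrier K" using j c(1) by simp
  have "y [^] ord c = c [^] (ord c * j)" using j c(1) by (simp add: nat_pow_pow mult.commute)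
  also have "\<dots> = \<one>" using nat_pow_pow[OF c(1), of "ord c" j] c(1) by simp
  finally have "ord y dvd ord c" using pow_eq_id[OF yc] by simp
  then show ?thesis using card_cyc[OF assms(1,2) c(1)] c(2) by simp
qed

lemma mc_with_p:
  assumes "group K" "finite (carrier K)" "Factorial_Ring.prime p" "p dvd order K"
  shows "\<exists>B. max_cyclic_subgroup K B \<and> p dvd card B"
proof -
  obtain y where y: "y \<in> carrier K" "group.ord K y = p" using cauchy[OF assms] by blast
  obtain C where C: "max_cyclic_subgroup K C" "cyc K y \<subseteq> C" using exists_mc[OF assms(1,2) y(1)] by blast
  have "y \<in> C" using C(2) cyc_self[OF assms(1) y(1)] by blast
  then show ?thesis using ord_dvd_card_mc[OF assms(1,2) C(1)] y(2) C(1) by auto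
qed

lemma pgroup_mc_dvd:
  fixes H (structure)
  assumes "group H" "finite (carrier H)" "Factorial_Ring.prime p" "order H = p ^ n" "order H > 1"
    "max_cyclic_subgroup H A"
  shows "p dvd card A"
proof -
  interpret group H by fact
  obtain a where a: "a \<in> carrier H" "A = cyc H a" using mc_cyc[OF assms(1,2,6)] by blast
  obtain h where h: "h \<in> carrier H" "h \<noteq> \<one>" using nontriv_elem[OF assms(1,2,5)] by blast
  have "A \<noteq> {\<one>}" using mc_not_one[OF assms(1,2,6) h] .
  then have "a \<noteq> \<one>" using a(2) cyc_one[OF assms(1)] by auto
  then have o1: "ord a \<noteq> 1" using ord_eq_1[OF a(1)] by simp
  have "ord a dvd p ^ n" using ord_dvd_group_order[OF a(1)] assms(4) by simp
  then obtain i where i: "i \<le> n" "ord a = p ^ i" using divides_primepow_nat[OF assms(3)] by blast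
  then have "i \<noteq> 0" using o1 by auto
  then have "p dvd ord a" using i(2) by (simp add: dvd_power)
  then show ?thesis using card_cyc[OF assms(1,2) a(1)] a(2) by simp
qed

lemma pw_union_sig:
  assumes "pw R A" "pw R B" "\<And>x y. (x,y) \<in> R \<Longrightarrow> f x = f y" "\<And>a b. a \<in> A \<Longrightarrow> b \<in> B \<Longrightarrow> f a \<noteq> f b"
  shows "pw R (A \<union> B)" "A \<inter> B = {}"
proof -
  show "pw R (A \<union> B)" using assms unfolding pw_def by (metis Un_iff)
  show "A \<inter> B = {}" using assms(4) by blast
qed

lemma coprime_struct:
  assumes "group H" "group K" "finite (carrier H)" "finite (carrier K)" "coprime (order H) (order K)"
    "max_cyclic_subgroup (H \<times>\<times> K) C"
  shows "\<exists>u v. u \<in> carrier H \<and> v \<in> carrier K \<and> C = cyc H u \<times> cyc K v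
     \<and> max_cyclic_subgroup H (cyc H u) \<and> max_cyclic_subgroup K (cyc K v)"
proof -
  note G = DirProd_group_fin[OF assms(1-4)]
  have cop: "coprime (group.ord H u) (group.ord K v)" if "u \<in> carrier H" "v \<in> carrier K" for u v
    using coprime_divisors[OF group.ord_dvd_group_order[OF assms(1) that(1)] group.ord_dvd_group_order[OF assms(2) that(2)] assms(5)] .
  obtain w where w: "w \<in> carrier (H \<times>\<times> K)" "C = cyc (H \<times>\<times> K) w" using mc_cyc[OF G assms(6)] by blast
  obtain u v where uv: "w = (u,v)" "u \<in> carrier H" "v \<in> carrier K" using w(1) by auto
  have C: "C = cyc H u \<times> cyc K v" using w(2) uv cyc_coprime[OF assms(1-4) uv(2,3) cop[OF uv(2,3)]] by simp
  have nu: "cyc H u \<noteq> {}" using cyc_self[OF assms(1) uv(2)] by blast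
  have nv: "cyc K v \<noteq> {}" using cyc_self[OF assms(2) uv(3)] by blast
  have mu: "max_cyclic_subgroup H (cyc H u)" unfolding max_cyclic_subgroup_def
  proof (intro conjI notI)
    show "cyclic_subgroup H (cyc H u)" using cyclic_iff[OF assms(1,3)] uv(2) by blast
    assume "\<exists>D. cyclic_subgroup H D \<and> cyc H u \<subset> D"
    then obtain D where D: "cyclic_subgroup H D" "cyc H u \<subset> D" by blast
    obtain x where x: "x \<in> carrier H" "D = cyc H x" using D(1) cyclic_iff[OF assms(1,3)] by auto
    have e: "cyc (H \<times>\<times> K) (x,v) = cyc H x \<times> cyc K v" using cyc_coprime[OF assms(1-4) x(1) uv(3) cop[OF x(1) uv(3)]] .
    have "C \<subseteq> cyc (H \<times>\<times> K) (x,v)" unfolding e C using D(2) x(2) by auto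
    then have "cyc (H \<times>\<times> K) (x,v) = C" using mc_eq[OF G assms(6)] x(1) uv(3) by simp
    then have "cyc H x \<times> cyc K v = cyc H u \<times> cyc K v" unfolding e C .
    then have "cyc H x = cyc H u" using nv by (metis fst_image_times)
    then show False using D(2) x(2) by simp
  qed
  have mv: "max_cyclic_subgroup K (cyc K v)" unfolding max_cyclic_subgroup_def
  proof (intro conjI notI)
    show "cyclic_subgroup K (cyc K v)" using cyclic_iff[OF assms(2,4)] uv(3) by blast
    assume "\<exists>D. cyclic_subgroup K D \<and> cyc K v \<subset> D"
    then obtain D where D: "cyclic_subgroup K D" "cyc K v \<subset> D" by blast
    obtain x where x: "x \<in> carrier K" "D = cyc K x" using D(1) cyclic_iff[OF assms(2,4)] by auto
    have e: "cyc (H \<times>\<times> K) (u,x) = cyc H u \<times> cyc K x" using cyc_coprime[OF assms(1-4) uv(2) x(1) cop[OF uv(2) x(1)]] .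
    have "C \<subseteq> cyc (H \<times>\<times> K) (u,x)" unfolding e C using D(2) x(2) by auto
    then have "cyc (H \<times>\<times> K) (u,x) = C" using mc_eq[OF G assms(6)] x(1) uv(2) by simp
    then have "cyc H u \<times> cyc K x = cyc H u \<times> cyc K v" unfolding e C .
    then have "cyc K x = cyc K v" using nu by (metis snd_image_times)
    then show False using D(2) x(2) by simp
  qed
  show ?thesis using uv(2,3) C mu mv by blast
qed

lemma part_ii:
  assumes "group H" "group K" "finite (carrier H)" "finite (carrier K)" "coprime (order H) (order K)"
  shows "eta (H \<times>\<times> K) \<le> eta H * eta K"
proof -
  note G = DirProd_group_fin[OF assms(1-4)]
  obtain TA where TA: "TA \<subseteq> MC H" "card TA = eta H" "pw (RC H) TA" "\<forall>s\<in>MC H. \<exists>t\<in>TA. (s,t) \<in> RC H"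
    using transv[OF assms(1,3)] by blast
  obtain TB where TB: "TB \<subseteq> MC K" "card TB = eta K" "pw (RC K) TB" "\<forall>s\<in>MC K. \<exists>t\<in>TB. (s,t) \<in> RC K"
    using transv[OF assms(2,4)] by blast
  define T1 where "T1 = (\<lambda>(A,B). FF H K A B) ` (TA \<times> TB)"
  note T = T1_lemma[OF assms(1-4) TA(1) TB(1) TA(3) TB(3), folded T1_def]
  have finT: "finite T1" using T(1) mcs_fin(1)[OF G] finite_subset by blast
  have cover: "\<forall>C\<in>MC (H \<times>\<times> K). \<exists>t\<in>T1. (C,t) \<in> RC (H \<times>\<times> K)"
  proof
    fix C assume C: "C \<in> MC (H \<times>\<times> K)"
    then have Cm: "max_cyclic_subgroup (H \<times>\<times> K) C" unfolding max_cyclic_subgroups_def by simp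
    obtain u v where uv: "u \<in> carrier H" "v \<in> carrier K" "C = cyc H u \<times> cyc K v"
      "max_cyclic_subgroup H (cyc H u)" "max_cyclic_subgroup K (cyc K v)"
      using coprime_struct[OF assms Cm] by blast
    obtain A where A: "A \<in> TA" "(cyc H u, A) \<in> RC H" using TA(4) uv(4) unfolding max_cyclic_subgroups_def by blast
    obtain B where B: "B \<in> TB" "(cyc K v, B) \<in> RC K" using TB(4) uv(5) unfolding max_cyclic_subgroups_def by blast
    obtain g where g: "g \<in> carrier H" "A = conj_subset H g (cyc H u)" using A(2) unfolding subset_conj_rel_def by auto
    obtain k where k: "k \<in> carrier K" "B = conj_subset K k (cyc K v)" using B(2) unfolding subset_conj_rel_def by auto
    have Am: "max_cyclic_subgroup H A" using A(1) TA(1) unfolding max_cyclic_subgroups_def by auto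
    have Bm: "max_cyclic_subgroup K B" using B(1) TB(1) unfolding max_cyclic_subgroups_def by auto
    note FP = FF_prop[OF assms(1-4) Am Bm]
    obtain u' v' where uv': "FF H K A B = cyc H u' \<times> cyc K v'" "u' \<in> carrier H" "v' \<in> carrier K"
      using coprime_struct[OF assms FP[THEN conjunct1]] by blast
    have "cyc H u' = A" using FP uv' cyc_self[OF assms(2) uv'(3)] by (metis empty_iff fst_image_times)
    moreover have "cyc K v' = B" using FP uv' cyc_self[OF assms(1) uv'(2)] by (metis empty_iff snd_image_times)
    ultimately have "FF H K A B = A \<times> B" using uv'(1) by simp
    also have "\<dots> = conj_subset (H \<times>\<times> K) (g,k) C" using uv(3) g(2) k(2) conj_times[OF assms(1,2) g(1) k(1)] by simp
    finally have "(C, FF H K A B) \<in> RC (H \<times>\<times> K)"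
      using C FP g(1) k(1) unfolding subset_conj_rel_def max_cyclic_subgroups_def by auto
    moreover have "FF H K A B \<in> T1" unfolding T1_def using A(1) B(1) by auto
    ultimately show "\<exists>t\<in>T1. (C,t) \<in> RC (H \<times>\<times> K)" by blast
  qed
  have "eta (H \<times>\<times> K) \<le> card T1" unfolding eta_def by (rule upper_bound[OF mcs_fin(2)[OF G] finT T(1) cover])
  then show ?thesis using T(2) TA(2) TB(2) by simp
qed

lemma T2_lemma:
  assumes "group H" "group K" "finite (carrier H)" "finite (carrier K)" "Factorial_Ring.prime p"
    "order H = p ^ n" "TB \<subseteq> S" "S \<subseteq> MC K" "\<forall>B\<in>S. p dvd card B" "pw (subset_conj_rel K S) TB"
  defines "T2 \<equiv> (\<lambda>B. {\<one>\<^bsub>H\<^esub>} \<times> B) ` TB"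
  shows "T2 \<subseteq> MC (H \<times>\<times> K)" "card T2 = card TB" "pw (RC (H \<times>\<times> K)) T2"
    "\<forall>C\<in>T2. fst ` C = {\<one>\<^bsub>H\<^esub>} \<and> max_cyclic_subgroup K (snd ` C)"
proof -
  have Bm: "max_cyclic_subgroup K B" if "B \<in> TB" for B using that assms(7,8) unfolding max_cyclic_subgroups_def by auto
  have Bne: "B \<noteq> {}" if "B \<in> TB" for B using one_in_mc[OF assms(2,4) Bm[OF that]] by blast
  show "T2 \<subseteq> MC (H \<times>\<times> K)" unfolding T2_def max_cyclic_subgroups_def
    using E_max[OF assms(1-6) Bm] assms(7,9) by auto
  have inj: "inj_on (\<lambda>B. {\<one>\<^bsub>H\<^esub>} \<times> B) TB" by (rule inj_onI) (metis insert_not_empty snd_image_times)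
  show "card T2 = card TB" unfolding T2_def by (rule card_image[OF inj])
  show "\<forall>C\<in>T2. fst ` C = {\<one>\<^bsub>H\<^esub>} \<and> max_cyclic_subgroup K (snd ` C)"
    unfolding T2_def using Bm Bne by auto
  show "pw (RC (H \<times>\<times> K)) T2" unfolding pw_def
  proof (intro ballI impI)
    fix C D assume CD: "C \<in> T2" "D \<in> T2" "(C,D) \<in> RC (H \<times>\<times> K)"
    obtain B where B: "B \<in> TB" "C = {\<one>\<^bsub>H\<^esub>} \<times> B" using CD(1) unfolding T2_def by auto
    obtain B' where B': "B' \<in> TB" "D = {\<one>\<^bsub>H\<^esub>} \<times> B'" using CD(2) unfolding T2_def by auto
    obtain g k where gk: "g \<in> carrier H" "k \<in> carrier K" "snd ` D = conj_subset K k (snd ` C)"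
      using rel_proj[OF assms(1,2) CD(3)] by blast
    have "B' = conj_subset K k B" using gk(3) B B' by simp
    then have "(B, B') \<in> subset_conj_rel K S" using B(1) B'(1) assms(7) gk(2) unfolding subset_conj_rel_def by auto
    then have "B = B'" using assms(10) B(1) B'(1) unfolding pw_def by blast
    then show "C = D" using B B' by simp
  qed
qed

lemma T3_lemma:
  assumes "group H" "group K" "finite (carrier H)" "finite (carrier K)" "Factorial_Ring.prime p"
    "order K = p ^ n" "TA \<subseteq> MC H" "\<forall>A\<in>MC H. p dvd card A" "pw (RC H) TA"
  defines "T3 \<equiv> (\<lambda>A. A \<times> {\<one>\<^bsub>K\<^esub>}) ` TA"
  shows "T3 \<subseteq> MC (H \<times>\<times> K)" "card T3 = card TA" "pw (RC (H \<times>\<times> K)) T3"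
    "\<forall>C\<in>T3. snd ` C = {\<one>\<^bsub>K\<^esub>} \<and> max_cyclic_subgroup H (fst ` C)"
proof -
  have Am: "max_cyclic_subgroup H A" if "A \<in> TA" for A using that assms(7) unfolding max_cyclic_subgroups_def by auto
  have Ane: "A \<noteq> {}" if "A \<in> TA" for A using one_in_mc[OF assms(1,3) Am[OF that]] by blast
  show "T3 \<subseteq> MC (H \<times>\<times> K)" unfolding T3_def max_cyclic_subgroups_def
    using E'_max[OF assms(1-6) Am] assms(7,8) by auto
  have inj: "inj_on (\<lambda>A. A \<times> {\<one>\<^bsub>K\<^esub>}) TA" by (rule inj_onI) (metis insert_not_empty fst_image_times)
  show "card T3 = card TA" unfolding T3_def by (rule card_image[OF inj])
  show "\<forall>C\<in>T3. snd ` C = {\<one>\<^bsub>K\<^esub>} \<and> max_cyclic_subgroup H (fst ` C)"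
    unfolding T3_def using Am Ane by auto
  show "pw (RC (H \<times>\<times> K)) T3" unfolding pw_def
  proof (intro ballI impI)
    fix C D assume CD: "C \<in> T3" "D \<in> T3" "(C,D) \<in> RC (H \<times>\<times> K)"
    obtain A where A: "A \<in> TA" "C = A \<times> {\<one>\<^bsub>K\<^esub>}" using CD(1) unfolding T3_def by auto
    obtain A' where A': "A' \<in> TA" "D = A' \<times> {\<one>\<^bsub>K\<^esub>}" using CD(2) unfolding T3_def by auto
    obtain g k where gk: "g \<in> carrier H" "k \<in> carrier K" "fst ` D = conj_subset H g (fst ` C)"
      using rel_proj[OF assms(1,2) CD(3)] by blast
    have "A' = conj_subset H g A" using gk(3) A A' by simp
    then have "(A, A') \<in> RC H" using A(1) A'(1) assms(7) gk(1) unfolding subset_conj_rel_def by auto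
    then have "A = A'" using assms(9) A(1) A'(1) unfolding pw_def by blast
    then show "C = D" using A A' by simp
  qed
qed

lemma mc_fst_ne_one:
  assumes "group H" "finite (carrier H)" "order H > 1" "max_cyclic_subgroup H A"
  shows "A \<noteq> {\<one>\<^bsub>H\<^esub>}"
  using nontriv_elem[OF assms(1-3)] mc_not_one[OF assms(1,2,4)] by blast

lemma part_iii:
  assumes "group H" "group K" "finite (carrier H)" "finite (carrier K)"
    "Factorial_Ring.prime p" "p dvd order K" "p_group p H" "order H > 1"
  shows "eta H * eta K + eta_p p K \<le> eta (H \<times>\<times> K)" "eta_p p K > 0"
proof -
  note G = DirProd_group_fin[OF assms(1-4)]
  obtain n where n: "order H = p ^ n" using assms(7) unfolding p_group_def by blast
  define S where "S = {C \<in> MC K. p dvd card C}"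
  define R where "R = subset_conj_rel K S"
  have ep: "eta_p p K = card (S // R)" unfolding eta_p_def S_def R_def Let_def ..
  have eqv: "equiv S R" unfolding R_def
    by (rule equiv_conj[OF assms(2)]) (use mc_sub[OF assms(2,4)] in \<open>auto simp: S_def max_cyclic_subgroups_def\<close>)
  have finS: "finite S" using mcs_fin(1)[OF assms(2,4)] unfolding S_def by simp
  obtain TBp where TBp: "TBp \<subseteq> S" "card TBp = card (S//R)" "\<forall>t\<in>TBp. \<forall>t'\<in>TBp. (t,t') \<in> R \<longrightarrow> t = t'"
    using transversal[OF eqv finS] by blast
  obtain TA where TA: "TA \<subseteq> MC H" "card TA = eta H" "pw (RC H) TA" using transv[OF assms(1,3)] by blast
  obtain TB where TB: "TB \<subseteq> MC K" "card TB = eta K" "pw (RC K) TB" using transv[OF assms(2,4)] by blast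
  define T1 where "T1 = (\<lambda>(A,B). FF H K A B) ` (TA \<times> TB)"
  note T = T1_lemma[OF assms(1-4) TA(1) TB(1) TA(3) TB(3), folded T1_def]
  define T2 where "T2 = (\<lambda>B. {\<one>\<^bsub>H\<^esub>} \<times> B) ` TBp"
  have SM: "S \<subseteq> MC K" "\<forall>B\<in>S. p dvd card B" unfolding S_def by auto
  note U = T2_lemma[OF assms(1-5) n TBp(1) SM TBp(3)[folded pw_def, unfolded R_def], folded T2_def]
  have inv: "(fst ` x = {\<one>\<^bsub>H\<^esub>}) = (fst ` y = {\<one>\<^bsub>H\<^esub>})" if "(x,y) \<in> RC (H \<times>\<times> K)" for x y
    using proj_rel_iff[OF assms(1-4) that] by blast
  have sig: "(fst ` a = {\<one>\<^bsub>H\<^esub>}) \<noteq> (fst ` b = {\<one>\<^bsub>H\<^esub>})" if "a \<in> T1" "b \<in> T2" for a b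
    using T(4) U(4) that mc_fst_ne_one[OF assms(1,3,8)] by blast
  note UU = pw_union_sig[of "RC (H \<times>\<times> K)" T1 T2 "\<lambda>C. fst ` C = {\<one>\<^bsub>H\<^esub>}", OF T(3) U(3) inv sig]
  have fin1: "finite T1" using T(1) mcs_fin(1)[OF G] finite_subset by blast
  have fin2: "finite T2" using U(1) mcs_fin(1)[OF G] finite_subset by blast
  have "card (T1 \<union> T2) \<le> eta (H \<times>\<times> K)" using eta_lower[OF G _ UU(1)] T(1) U(1) by blast
  then show "eta H * eta K + eta_p p K \<le> eta (H \<times>\<times> K)"
    using card_Un_disjoint[OF fin1 fin2 UU(2)] T(2) U(2) TA(2) TB(2) TBp(2) ep by simp
  obtain B where B: "max_cyclic_subgroup K B" "p dvd card B" using mc_with_p[OF assms(2,4,5,6)] by blast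
  then have "B \<in> S" unfolding S_def max_cyclic_subgroups_def by simp
  then have "R``{B} \<in> S // R" by (rule quotientI)
  moreover have "finite (S // R)" using finS eqv by (simp add: equiv_type finite_quotient)
  ultimately show "eta_p p K > 0" unfolding ep by (metis card_gt_0_iff empty_iff)
qed

lemma part_v:
  assumes "group H" "group K" "finite (carrier H)" "finite (carrier K)"
    "p_group p H" "p_group p K" "order H > 1" "order K > 1"
  shows "eta H * eta K + eta H + eta K \<le> eta (H \<times>\<times> K)"
proof -
  note G = DirProd_group_fin[OF assms(1-4)]
  have p: "Factorial_Ring.prime p" using assms(5) unfolding p_group_def by blast
  obtain n where n: "order H = p ^ n" using assms(5) unfolding p_group_def by blast
  obtain m where m: "order K = p ^ m" using assms(6) unfolding p_group_def by blast
  obtain TA where TA: "TA \<subseteq> MC H" "card TA = eta H" "pw (RC H) TA" using transv[OF assms(1,3)] by blast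
  obtain TB where TB: "TB \<subseteq> MC K" "card TB = eta K" "pw (RC K) TB" using transv[OF assms(2,4)] by blast
  define T1 where "T1 = (\<lambda>(A,B). FF H K A B) ` (TA \<times> TB)"
  note T = T1_lemma[OF assms(1-4) TA(1) TB(1) TA(3) TB(3), folded T1_def]
  have dK: "\<forall>B\<in>MC K. p dvd card B"
    using pgroup_mc_dvd[OF assms(2,4) p m assms(8)] unfolding max_cyclic_subgroups_def by blast
  have dH: "\<forall>A\<in>MC H. p dvd card A"
    using pgroup_mc_dvd[OF assms(1,3) p n assms(7)] unfolding max_cyclic_subgroups_def by blast
  define T2 where "T2 = (\<lambda>B. {\<one>\<^bsub>H\<^esub>} \<times> B) ` TB"
  note U = T2_lemma[OF assms(1-4) p n TB(1) order.refl dK TB(3), folded T2_def]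
  define T3 where "T3 = (\<lambda>A. A \<times> {\<one>\<^bsub>K\<^esub>}) ` TA"
  note V = T3_lemma[OF assms(1-4) p m TA(1) dH TA(3), folded T3_def]
  define f where "f C = (fst ` C = {\<one>\<^bsub>H\<^esub>}, snd ` C = {\<one>\<^bsub>K\<^esub>})" for C
  have inv: "f x = f y" if "(x,y) \<in> RC (H \<times>\<times> K)" for x y
    using proj_rel_iff[OF assms(1-4) that] unfolding f_def by simp
  have neH: "A \<noteq> {\<one>\<^bsub>H\<^esub>}" if "max_cyclic_subgroup H A" for A using mc_fst_ne_one[OF assms(1,3,7) that] .
  have neK: "B \<noteq> {\<one>\<^bsub>K\<^esub>}" if "max_cyclic_subgroup K B" for B using mc_fst_ne_one[OF assms(2,4,8) that] .
  have f1: "f C = (False, False)" if "C \<in> T1" for C using T(4) that neH neK unfolding f_def by blast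
  have f2: "f C = (True, False)" if "C \<in> T2" for C using U(4) that neK unfolding f_def by blast
  have f3: "f C = (False, True)" if "C \<in> T3" for C using V(4) that neH unfolding f_def by blast
  have s12: "f a \<noteq> f b" if "a \<in> T1" "b \<in> T2" for a b using f1 f2 that by simp
  note U12 = pw_union_sig[of "RC (H \<times>\<times> K)" T1 T2 f, OF T(3) U(3) inv s12]
  have s123: "f a \<noteq> f b" if "a \<in> T1 \<union> T2" "b \<in> T3" for a b using f1 f2 f3 that by auto
  note U123 = pw_union_sig[of "RC (H \<times>\<times> K)" "T1 \<union> T2" T3 f, OF U12(1) V(3) inv s123]
  have fin1: "finite T1" using T(1) mcs_fin(1)[OF G] finite_subset by blast
  have fin2: "finite T2" using U(1) mcs_fin(1)[OF G] finite_subset by blast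
  have fin3: "finite T3" using V(1) mcs_fin(1)[OF G] finite_subset by blast
  have "card (T1 \<union> T2 \<union> T3) \<le> eta (H \<times>\<times> K)" using eta_lower[OF G _ U123(1)] T(1) U(1) V(1) by blast
  moreover have "card (T1 \<union> T2 \<union> T3) = card T1 + card T2 + card T3"
    using card_Un_disjoint[OF fin1 fin2 U12(2)] card_Un_disjoint[OF _ fin3 U123(2)] fin1 fin2 by simp
  ultimately show ?thesis using T(2) U(2) V(2) TA(2) TB(2) by simp
qed

lemma part_iv:
  assumes "group H" "group K" "finite (carrier H)" "finite (carrier K)"
    "Factorial_Ring.prime p" "p dvd order H" "p dvd order K"
  shows "eta K < eta (H \<times>\<times> K)"
proof -
  note G = DirProd_group_fin[OF assms(1-4)]
  obtain B0 where B0: "max_cyclic_subgroup K B0" "p dvd card B0" using mc_with_p[OF assms(2,4,5,7)] by blast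
  obtain b0 where b0: "b0 \<in> carrier K" "B0 = cyc K b0" using mc_cyc[OF assms(2,4) B0(1)] by blast
  have one: "\<one>\<^bsub>H\<^esub> \<in> carrier H" using assms(1) by (simp add: group.is_monoid monoid.one_closed)
  obtain C0 where C0: "max_cyclic_subgroup (H \<times>\<times> K) C0" "cyc (H \<times>\<times> K) (\<one>\<^bsub>H\<^esub>, b0) \<subseteq> C0"
    using exists_mc[OF G, of "(\<one>\<^bsub>H\<^esub>, b0)"] one b0(1) by auto
  obtain w where w: "w \<in> carrier (H \<times>\<times> K)" "C0 = cyc (H \<times>\<times> K) w" using mc_cyc[OF G C0(1)] by blast
  obtain u v where uv: "w = (u,v)" "u \<in> carrier H" "v \<in> carrier K" using w(1) by auto
  have "(\<one>\<^bsub>H\<^esub>, b0) \<in> C0" using C0(2) cyc_self[OF G(1), of "(\<one>\<^bsub>H\<^esub>, b0)"] one b0(1) by auto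
  then obtain k where k: "u [^]\<^bsub>H\<^esub> (k::nat) = \<one>\<^bsub>H\<^esub>" "v [^]\<^bsub>K\<^esub> k = b0"
    using w(2) uv(1) by (auto simp: cyc_prod)
  have "snd ` cyc (H \<times>\<times> K) (\<one>\<^bsub>H\<^esub>, b0) \<subseteq> snd ` C0" using C0(2) by (rule image_mono)
  then have "B0 \<subseteq> cyc K v" using w(2) uv(1) b0(2) snd_cyc by metis
  then have vB: "cyc K v = B0" using mc_eq[OF assms(2,4) B0(1) _ uv(3)] by blast
  then obtain m where m: "v = b0 [^]\<^bsub>K\<^esub> (m::nat)" using cyc_self[OF assms(2) uv(3)] b0(2) unfolding cyc_def by auto
  have "p dvd group.ord K b0" using B0(2) b0 card_cyc[OF assms(2,4) b0(1)] by simp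
  then have nk: "\<not> p dvd k" using not_dvd_k[OF assms(2) b0(1) uv(3) k(2) m assms(5)] by blast
  have "group.ord H u dvd k" using group.pow_eq_id[OF assms(1) uv(2)] k(1) by simp
  then have npu: "\<not> p dvd card (cyc H u)" using nk card_cyc[OF assms(1,3) uv(2)] dvd_trans by metis
  have fC0: "fst ` C0 = cyc H u" using w(2) uv(1) fst_cyc by metis
  have etaK: "eta K > 0"
  proof -
    have "B0 \<in> MC K" using B0(1) unfolding max_cyclic_subgroups_def by simp
    then have "RC K `` {B0} \<in> MC K // RC K" by (rule quotientI)
    moreover have "finite (MC K // RC K)" using mcs_fin[OF assms(2,4)] by (simp add: equiv_type finite_quotient)
    ultimately show ?thesis unfolding eta_def by (metis card_gt_0_iff empty_iff)
  qed
  show ?thesis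
  proof (cases "max_cyclic_subgroup H (cyc H u)")
    case True
    obtain A1 where A1: "max_cyclic_subgroup H A1" "p dvd card A1" using mc_with_p[OF assms(1,3,5,6)] by blast
    have ne: "cyc H u \<noteq> A1" using A1(2) npu by auto
    have sub: "{cyc H u, A1} \<subseteq> MC H" using True A1(1) unfolding max_cyclic_subgroups_def by simp
    have cardeq: "card A1 = card (cyc H u)" if "(cyc H u, A1) \<in> RC H \<or> (A1, cyc H u) \<in> RC H"
    proof -
      from that show ?thesis
      proof
        assume "(cyc H u, A1) \<in> RC H"
        then obtain g where g: "g \<in> carrier H" "A1 = conj_subset H g (cyc H u)" unfolding subset_conj_rel_def by auto
        then show ?thesis using conj_card[OF assms(1) g(1) cyc_sub[OF assms(1) uv(2)]] by simp
      next
        assume "(A1, cyc H u) \<in> RC H"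
        then obtain g where g: "g \<in> carrier H" "cyc H u = conj_subset H g A1" unfolding subset_conj_rel_def by auto
        then show ?thesis using conj_card[OF assms(1) g(1) mc_sub[OF assms(1,3) A1(1)]] by simp
      qed
    qed
    have "pw (RC H) {cyc H u, A1}" unfolding pw_def using cardeq A1(2) npu by auto
    then have "card {cyc H u, A1} \<le> eta H" using eta_lower[OF assms(1,3) sub] by blast
    then have "2 \<le> eta H" using ne by simp
    then have "2 * eta K \<le> eta H * eta K" by simp
    then have "2 * eta K \<le> eta (H \<times>\<times> K)" using part_i[OF assms(1-4)] by linarith
    then show ?thesis using etaK by linarith
  next
    case False
    obtain A0 where A0: "max_cyclic_subgroup H A0" "cyc H \<one>\<^bsub>H\<^esub> \<subseteq> A0" using exists_mc[OF assms(1,3) one] by blast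
    obtain TB where TB: "TB \<subseteq> MC K" "card TB = eta K" "pw (RC K) TB" using transv[OF assms(2,4)] by blast
    have TA: "{A0} \<subseteq> MC H" "pw (RC H) {A0}" using A0(1) unfolding max_cyclic_subgroups_def pw_def by auto
    define T1 where "T1 = (\<lambda>(A,B). FF H K A B) ` ({A0} \<times> TB)"
    note T = T1_lemma[OF assms(1-4) TA(1) TB(1) TA(2) TB(3), folded T1_def]
    have C0m: "{C0} \<subseteq> MC (H \<times>\<times> K)" using C0(1) unfolding max_cyclic_subgroups_def by simp
    have pw0: "pw (RC (H \<times>\<times> K)) {C0}" unfolding pw_def by simp
    have inv: "max_cyclic_subgroup H (fst ` x) = max_cyclic_subgroup H (fst ` y)" if "(x,y) \<in> RC (H \<times>\<times> K)" for x y
      using proj_rel_iff[OF assms(1-4) that] by blast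
    have sig: "max_cyclic_subgroup H (fst ` a) \<noteq> max_cyclic_subgroup H (fst ` b)" if "a \<in> T1" "b \<in> {C0}" for a b
      using T(4) that False fC0 by auto
    note UU = pw_union_sig[of "RC (H \<times>\<times> K)" T1 "{C0}" "\<lambda>C. max_cyclic_subgroup H (fst ` C)", OF T(3) pw0 inv sig]
    have fin1: "finite T1" using T(1) mcs_fin(1)[OF G] finite_subset by blast
    have "card (T1 \<union> {C0}) \<le> eta (H \<times>\<times> K)" using eta_lower[OF G _ UU(1)] T(1) C0m by blast
    moreover have "card (T1 \<union> {C0}) = card T1 + 1" using card_Un_disjoint[OF fin1 _ UU(2)] by simp
    ultimately show ?thesis using T(2) TB(2) by simp
  qed
qed

theorem lemma2p1:
  fixes H :: "('a, 'c) monoid_scheme" and K :: "('b, 'd) monoid_scheme"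
  assumes "group H" "group K" "finite (carrier H)" "finite (carrier K)"
  shows "eta (H \<times>\<times> K) \<ge> eta H * eta K
    \<and> (coprime (order H) (order K) \<longrightarrow> eta (H \<times>\<times> K) = eta H * eta K)
    \<and> (\<forall>p. Factorial_Ring.prime p \<and> p dvd order K \<and> p_group p H \<and> order H > 1 \<longrightarrow>
           eta (H \<times>\<times> K) \<ge> eta H * eta K + eta_p p K \<and> eta H * eta K + eta_p p K > eta H * eta K)
    \<and> (\<forall>p. nilpotent_group H \<and> Factorial_Ring.prime p \<and> p dvd order H \<and> p dvd order K \<longrightarrow>
           eta (H \<times>\<times> K) > eta K)
    \<and> (\<forall>p. p_group p H \<and> p_group p K \<and> order H > 1 \<and> order K > 1 \<longrightarrow>
           eta (H \<times>\<times> K) \<ge> eta H * eta K + eta H + eta K)"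
proof (intro conjI allI impI)
  show "eta H * eta K \<le> eta (H \<times>\<times> K)" by (rule part_i[OF assms])
  show "eta (H \<times>\<times> K) = eta H * eta K" if "coprime (order H) (order K)"
    using part_i[OF assms] part_ii[OF assms that] by simp
  fix p
  {
    assume a: "Factorial_Ring.prime p \<and> p dvd order K \<and> p_group p H \<and> order H > 1"
    note r = part_iii[OF assms, of p] 
    show "eta H * eta K + eta_p p K \<le> eta (H \<times>\<times> K)" using r a by blast
    show "eta H * eta K < eta H * eta K + eta_p p K" using r a by simp
  }
  {
    assume a: "nilpotent_group H \<and> Factorial_Ring.prime p \<and> p dvd order H \<and> p dvd order K"
    show "eta K < eta (H \<times>\<times> K)" using part_iv[OF assms, of p] a by blast
  }
  {
    assume a: "p_group p H \<and> p_group p K \<and> order H > 1 \<and> order K > 1"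
    show "eta H * eta K + eta H + eta K \<le> eta (H \<times>\<times> K)" using part_v[OF assms, of p] a by blast
  }
qed

end
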